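(* Let $\Omega\subset\mathbb{R}^d$ ($d=1,2$) be a rectangular domain with periodic boundary conditions, $\varepsilon>0$, $\tau>0$, and $(f,g)=\int_\Omega f\bar g\,d{\bf x}$. Let $b_i,a_{ij}$ ($i,j=1,\dots,s$) be real numbers with $b_ia_{ij}+b_ja_{ji}=b_ib_j$ for all $i,j$. Consider the semi-discrete $s$-stage Runge–Kutta scheme: for $i=1,\dots,s$, \[ \begin{aligned} &E_{ni}=E^n+\tau\sum_{j} a_{ij}k_j^1,\quad k_i^1={\rm i}\big(\Delta E_{ni}-\varepsilon^2\Delta^2E_{ni}-N_{ni}E_{ni}\big),\\ &N_{ni}=N^n+\tau\sum_{j} a_{ij}k_j^2,\quad k_i^2=\Delta v_{ni},\\ &v_{ni}=v^n+\tau\sum_{j} a_{ij}k_j^3,\quad k_i^3=N_{ni}-\varepsilon^2\Delta N_{ni}+Q_{ni},\\ &Q_{ni}=q^n+\tau\sum_{j} a_{ij}k_j^4,\quad k_i^4=2\,{\rm Re}\big(\bar E_{ni}\,k_i^1\big), \end{aligned} \] with update $E^{n+1}=E^n+\tau\sum_i b_ik_i^1$, $N^{n+1}=N^n+\tau\sum_i b_ik_i^2$, $v^{n+1}=v^n+\tau\sum_i b_ik_i^3$, $q^{n+1}=q^n+\tau\sum_i b_ik_i^4$, and consistent initial data $E^0=E_0$, $N^0=N_0$, $q^0=|E_0|^2$, $\Delta v^0=N_1$, $\int_\Omega v^0\,d{\bf x}=0$ (with $\int_\Omega N_1\,d{\bf x}=0$). Assume the stage equations are solvable at every step. Then $\mathcal{H}^n=\mathcal{H}^0$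 for all $n=1,2,\dots,J$, where \[ \mathcal{H}^n=(\Delta E^n,E^n)-\varepsilon^2(\Delta E^n,\Delta E^n)-\tfrac12(N^n,N^n)+\tfrac{\varepsilon^2}{2}(\Delta N^n,N^n)-(N^n,|E^n|^2)+\tfrac12(\Delta v^n,v^n). \]
   Context: $\mathcal{H}^n$ is the semi-discrete version of the original Hamiltonian energy of the quantum Zakharov system ${\rm i}E_t+\Delta E-\varepsilon^2\Delta^2E=NE$, $N_{tt}-\Delta N+\varepsilon^2\Delta^2N=\Delta|E|^2$ (with $\Delta v=N_t$). $J$ is the number of time steps, $\tau=T/J$. *)

theory Defs
  imports "HOL-Analysis.Analysis"
begin

text \<open>Functions on R^d are modelled as maps real^'d \<Rightarrow> 'b; the periodic rectangle
  Omega = [0,L_1] x ... x [0,L_d] is cbox 0 L.\<close>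

definition partial :: "'d::finite \<Rightarrow> (real^'d \<Rightarrow> 'b::real_normed_vector) \<Rightarrow> real^'d \<Rightarrow> 'b" where
  "partial i f x = vector_derivative (\<lambda>t. f (x + t *\<^sub>R axis i 1)) (at 0)"

fun iter_partial :: "'d::finite list \<Rightarrow> (real^'d \<Rightarrow> 'b::real_normed_vector) \<Rightarrow> real^'d \<Rightarrow> 'b" where
  "iter_partial [] f = f"
| "iter_partial (i # is) f = partial i (iter_partial is f)"

definition smooth_fun :: "(real^'d::finite \<Rightarrow> 'b::real_normed_vector) \<Rightarrow> bool" where
  "smooth_fun f \<longleftrightarrow> (\<forall>is. continuous_on UNIV (iter_partial is f) \<and>
      (\<forall>i x. (\<lambda>t. iter_partial is f (x + t *\<^sub>R axis i 1)) differentiable (at 0)))"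

definition periodic_fun :: "real^'d::finite \<Rightarrow> (real^'d \<Rightarrow> 'b) \<Rightarrow> bool" where
  "periodic_fun L f \<longleftrightarrow> (\<forall>i x. f (x + L$i *\<^sub>R axis i 1) = f x)"

definition lap :: "(real^'d::finite \<Rightarrow> 'b::real_normed_vector) \<Rightarrow> real^'d \<Rightarrow> 'b" where
  "lap f = (\<lambda>x. \<Sum>i\<in>UNIV. partial i (partial i f) x)"

definition ip :: "real^'d::finite \<Rightarrow> (real^'d \<Rightarrow> complex) \<Rightarrow> (real^'d \<Rightarrow> complex) \<Rightarrow> complex" where
  "ip L f g = integral (cbox 0 L) (\<lambda>x. f x * cnj (g x))"

definition cx :: "(real^'d::finite \<Rightarrow> real) \<Rightarrow> real^'d \<Rightarrow> complex" where
  "cx f = (\<lambda>x. complex_of_real (f x))"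

definition energy :: "real^'d::finite \<Rightarrow> real \<Rightarrow> (real^'d \<Rightarrow> complex) \<Rightarrow> (real^'d \<Rightarrow> real)
     \<Rightarrow> (real^'d \<Rightarrow> real) \<Rightarrow> complex" where
  "energy L \<epsilon> E N v =
     ip L (lap E) E - of_real (\<epsilon>^2) * ip L (lap E) (lap E)
     - 1/2 * ip L (cx N) (cx N) + of_real (\<epsilon>^2) / 2 * ip L (cx (lap N)) (cx N)
     - ip L (cx N) (cx (\<lambda>x. (cmod (E x))^2)) + 1/2 * ip L (cx (lap v)) (cx v)"

end

theory Submission
  imports Defs
begin

definition lined :: "'d::finite \<Rightarrow> (real^'d \<Rightarrow> 'b::real_normed_vector) \<Rightarrow> bool" where
  "lined i f \<longleftrightarrow> (\<forall>x. (\<lambda>t. f (x + t *\<^sub>R axis i 1)) differentiable (at 0))"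

lemma lined_has:
  assumes "lined i f"
  shows "((\<lambda>t. f (x + t *\<^sub>R axis i 1)) has_vector_derivative partial i f x) (at 0)"
  using assms unfolding lined_def partial_def using vector_derivative_works by blast

lemma line_deriv:
  assumes "lined i f"
  shows "((\<lambda>t. f (x + t *\<^sub>R axis i 1)) has_vector_derivative partial i f (x + t0 *\<^sub>R axis i 1)) (at t0)"
proof -
  let ?y = "x + t0 *\<^sub>R axis i 1"
  have 1: "((\<lambda>s. f (?y + s *\<^sub>R axis i 1)) has_vector_derivative partial i f ?y) (at (t0 - t0))"
    using lined_has[OF assms] by simp
  have 2: "((\<lambda>t. t - t0) has_vector_derivative 1) (at t0)" by (auto intro!: derivative_eq_intros)
  have "((\<lambda>s. f (?y + s *\<^sub>R axis i 1)) \<circ> (\<lambda>t. t - t0) has_vector_derivative 1 *\<^sub>R partial i f ?y) (at t0)"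
    using vector_diff_chain_at[OF 2] 1 by blast
  moreover have "(\<lambda>s. f (?y + s *\<^sub>R axis i 1)) \<circ> (\<lambda>t. t - t0) = (\<lambda>t. f (x + t *\<^sub>R axis i 1))"
    by (auto simp: algebra_simps fun_eq_iff)
  ultimately show ?thesis by simp
qed

lemma partial_eqI:
  assumes "\<And>x. ((\<lambda>t. f (x + t *\<^sub>R axis i 1)) has_vector_derivative D x) (at 0)"
  shows "partial i f = D" "lined i f"
  using assms unfolding partial_def lined_def fun_eq_iff
  by (auto intro: vector_derivative_at differentiableI_vector)

lemma partial_add:
  assumes "lined i f" "lined i g"
  shows "partial i (\<lambda>x. f x + g x) = (\<lambda>x. partial i f x + partial i g x)"
    "lined i (\<lambda>x. f x + g x)"
  by (rule partial_eqI, rule has_vector_derivative_add, rule lined_has[OF assms(1)], rule lined_has[OF assms(2)])+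

lemma partial_blin:
  assumes "bounded_linear h" "lined i f"
  shows "partial i (\<lambda>x. h (f x)) = (\<lambda>x. h (partial i f x))"
    "lined i (\<lambda>x. h (f x))"
  by (rule partial_eqI, rule bounded_linear.has_vector_derivative[OF assms(1)], rule lined_has[OF assms(2)])+

lemma partial_const:
  shows "partial i (\<lambda>x. c) = (\<lambda>x. 0)" "lined i (\<lambda>x. c)"
  by (rule partial_eqI, rule has_vector_derivative_const)+

lemma partial_mult:
  fixes f g :: "real^'d::finite \<Rightarrow> 'b::real_normed_algebra"
  assumes "lined i f" "lined i g"
  shows "partial i (\<lambda>x. f x * g x) = (\<lambda>x. f x * partial i g x + partial i f x * g x)"
    "lined i (\<lambda>x. f x * g x)"
proof -
  have "((\<lambda>t. f (x + t *\<^sub>R axis i 1) * g (x + t *\<^sub>R axis i 1)) has_vector_derivative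
     (f x * partial i g x + partial i f x * g x)) (at 0)" for x
    using has_vector_derivative_mult[OF lined_has[OF assms(1)] lined_has[OF assms(2)], of x] by simp
  note d = this
  show "partial i (\<lambda>x. f x * g x) = (\<lambda>x. f x * partial i g x + partial i f x * g x)"
    by (rule partial_eqI(1)[OF d])
  show "lined i (\<lambda>x. f x * g x)" by (rule partial_eqI(2)[OF d])
qed

lemma partial_sum:
  assumes "\<And>j. j \<in> A \<Longrightarrow> lined i (g j)"
  shows "partial i (\<lambda>x. \<Sum>j\<in>A. g j x) = (\<lambda>x. \<Sum>j\<in>A. partial i (g j) x)"
    "lined i (\<lambda>x. \<Sum>j\<in>A. g j x)"
  by (rule partial_eqI, rule has_vector_derivative_sum, rule lined_has[OF assms], assumption)+

lemma partial_periodic: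
  assumes "periodic_fun L f"
  shows "periodic_fun L (partial i f)"
proof -
  have "(\<lambda>t. f (x + L $ j *\<^sub>R axis j 1 + t *\<^sub>R axis i 1)) = (\<lambda>t. f (x + t *\<^sub>R axis i 1))" for x j
  proof
    fix t
    have eq: "x + L $ j *\<^sub>R axis j 1 + t *\<^sub>R axis i 1 = (x + t *\<^sub>R axis i 1) + L $ j *\<^sub>R axis j 1"
      by (simp add: algebra_simps)
    show "f (x + L $ j *\<^sub>R axis j 1 + t *\<^sub>R axis i 1) = f (x + t *\<^sub>R axis i 1)"
      unfolding eq using assms unfolding periodic_fun_def by blast
  qed
  then show ?thesis unfolding periodic_fun_def partial_def by simp
qed

lemma smooth_iff: "smooth_fun f \<longleftrightarrow> (\<forall>is. continuous_on UNIV (iter_partial is f) \<and> (\<forall>i. lined i (iter_partial is f)))"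
  unfolding smooth_fun_def lined_def by auto

lemma iter_partial_snoc: "iter_partial is (partial i f) = iter_partial (is @ [i]) f"
  by (induction "is") auto

lemma smooth_partial: "smooth_fun f \<Longrightarrow> smooth_fun (partial i f)"
  by (simp add: smooth_iff iter_partial_snoc)

lemma smooth_cont: "smooth_fun f \<Longrightarrow> continuous_on UNIV f"
  unfolding smooth_iff by (metis iter_partial.simps(1))

lemma smooth_lined: "smooth_fun f \<Longrightarrow> lined i f"
  unfolding smooth_iff by (metis iter_partial.simps(1))

lemma iter_partial_add: "smooth_fun f \<Longrightarrow> smooth_fun g \<Longrightarrow>
   iter_partial is (\<lambda>x. f x + g x) = (\<lambda>x. iter_partial is f x + iter_partial is g x)"
  by (induction "is") (auto simp: smooth_iff partial_add)

lemma smooth_add: "smooth_fun f \<Longrightarrow> smooth_fun g \<Longrightarrow> smooth_fun (\<lambda>x. f x + g x)"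
  by (auto simp: smooth_iff iter_partial_add intro: continuous_on_add partial_add(2))

lemma iter_partial_blin: "bounded_linear h \<Longrightarrow> smooth_fun f \<Longrightarrow>
   iter_partial is (\<lambda>x. h (f x)) = (\<lambda>x. h (iter_partial is f x))"
  by (induction "is") (auto simp: smooth_iff partial_blin)

lemma smooth_blin: "bounded_linear h \<Longrightarrow> smooth_fun f \<Longrightarrow> smooth_fun (\<lambda>x. h (f x))"
  by (auto simp: smooth_iff iter_partial_blin intro: bounded_linear.continuous_on partial_blin(2))

lemma smooth_zero: "smooth_fun (\<lambda>x. 0)"
proof -
  have z: "iter_partial is (\<lambda>x. 0) = (\<lambda>x. 0)" for "is"
    by (induction "is") (auto simp: partial_const)
  show ?thesis unfolding smooth_iff z by (simp add: partial_const)
qed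

lemma smooth_sum: "finite A \<Longrightarrow> (\<And>j. j \<in> A \<Longrightarrow> smooth_fun (g j)) \<Longrightarrow> smooth_fun (\<lambda>x. \<Sum>j\<in>A. g j x)"
  by (induction A rule: finite_induct) (auto intro: smooth_zero smooth_add)

inductive pp :: "(real^'d::finite \<Rightarrow> 'b) \<Rightarrow> (real^'d \<Rightarrow> 'b) \<Rightarrow> (real^'d \<Rightarrow> 'b::real_normed_algebra) \<Rightarrow> bool"
  for f g where
  ppb: "pp f g (\<lambda>x. iter_partial a f x * iter_partial b g x)"
| ppa: "pp f g h1 \<Longrightarrow> pp f g h2 \<Longrightarrow> pp f g (\<lambda>x. h1 x + h2 x)"

lemma pp_props:
  assumes "smooth_fun f" "smooth_fun g" "pp f g h"
  shows "continuous_on UNIV h \<and> (\<forall>i. lined i h \<and> pp f g (partial i h))"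
  using assms(3)
proof induction
  case (ppb a b)
  have la: "lined i (iter_partial a f)" and lb: "lined i (iter_partial b g)" for i
    using assms(1,2) by (auto simp: smooth_iff)
  have "pp f g (\<lambda>x. iter_partial a f x * iter_partial (i # b) g x + iter_partial (i # a) f x * iter_partial b g x)" for i
    by (intro pp.intros)
  then show ?case using assms(1,2) la lb
    by (auto simp: smooth_iff partial_mult intro!: continuous_on_mult)
next
  case (ppa h1 h2)
  then show ?case by (auto simp: partial_add intro!: continuous_on_add pp.intros)
qed

lemma smooth_mult:
  fixes f g :: "real^'d::finite \<Rightarrow> 'b::real_normed_algebra"
  assumes "smooth_fun f" "smooth_fun g"
  shows "smooth_fun (\<lambda>x. f x * g x)"
proof -
  have "pp f g (iter_partial is (\<lambda>x. f x * g x))" for "is"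
  proof (induction "is")
    case Nil
    show ?case using ppb[of f g "[]" "[]"] by simp
  next
    case (Cons i "is")
    then show ?case using pp_props[OF assms] by simp
  qed
  then show ?thesis using pp_props[OF assms] by (simp add: smooth_iff)
qed

lemma periodic2: "periodic_fun L f \<Longrightarrow> periodic_fun L g \<Longrightarrow> periodic_fun L (\<lambda>x. H (f x) (g x))"
  by (simp add: periodic_fun_def)

lemma periodic1: "periodic_fun L f \<Longrightarrow> periodic_fun L (\<lambda>x. H (f x))"
  by (simp add: periodic_fun_def)

lemma periodic_sum: "(\<And>j. j \<in> A \<Longrightarrow> periodic_fun L (g j)) \<Longrightarrow> periodic_fun L (\<lambda>x. \<Sum>j\<in>A. H j (g j x))"
  by (simp add: periodic_fun_def)

lemma smooth_lap: "smooth_fun f \<Longrightarrow> smooth_fun (lap f)"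
  unfolding lap_def by (intro smooth_sum smooth_partial) auto

lemma periodic_lap: "periodic_fun L f \<Longrightarrow> periodic_fun L (lap f)"
  unfolding lap_def by (intro periodic_sum[where H="\<lambda>j y. y", simplified] partial_periodic)

lemma lap_blin: assumes "bounded_linear h" "smooth_fun f"
  shows "lap (\<lambda>x. h (f x)) = (\<lambda>x. h (lap f x))"
proof -
  have "partial i (partial i (\<lambda>x. h (f x))) = (\<lambda>x. h (partial i (partial i f) x))" for i
    using assms by (simp add: partial_blin smooth_lined smooth_partial)
  then show ?thesis unfolding lap_def
    using bounded_linear.linear[OF assms(1)] by (simp add: linear_sum)
qed

definition lc :: "(real^'d::finite \<Rightarrow> complex) \<Rightarrow> real \<Rightarrow> (nat \<Rightarrow> real) \<Rightarrow> (nat \<Rightarrow> real^'d \<Rightarrow> complex) \<Rightarrow> nat set \<Rightarrow> real^'d \<Rightarrow> complex" where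
  "lc f t c g A = (\<lambda>x. f x + of_real t * (\<Sum>j\<in>A. of_real (c j) * g j x))"

lemma partial_lc:
  assumes "lined i f" "\<And>j. j \<in> A \<Longrightarrow> lined i (g j)"
  shows "partial i (lc f t c g A) = lc (partial i f) t c (\<lambda>j. partial i (g j)) A"
    "lined i (lc f t c g A)"
proof -
  have d: "((\<lambda>s. lc f t c g A (x + s *\<^sub>R axis i 1)) has_vector_derivative lc (partial i f) t c (\<lambda>j. partial i (g j)) A x) (at 0)" for x
    unfolding lc_def
    by (intro has_vector_derivative_add lined_has has_vector_derivative_mult_right has_vector_derivative_sum assms)
  show "partial i (lc f t c g A) = lc (partial i f) t c (\<lambda>j. partial i (g j)) A"
    by (rule partial_eqI(1)[OF d])
  show "lined i (lc f t c g A)" by (rule partial_eqI(2)[OF d])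
qed

lemma smooth_lc: "smooth_fun f \<Longrightarrow> finite A \<Longrightarrow> (\<And>j. j \<in> A \<Longrightarrow> smooth_fun (g j)) \<Longrightarrow> smooth_fun (lc f t c g A)"
  unfolding lc_def
  by (intro smooth_add smooth_blin[OF bounded_linear_mult_right, of "\<lambda>x. \<Sum>j\<in>A. of_real (c j) * g j x", simplified]
      smooth_sum smooth_blin[OF bounded_linear_mult_right, of "g j" for j, simplified]) auto

lemma lap_lc:
  assumes "smooth_fun f" "\<And>j. j \<in> A \<Longrightarrow> smooth_fun (g j)"
  shows "lap (lc f t c g A) = lc (lap f) t c (\<lambda>j. lap (g j)) A"
proof -
  have "partial i (partial i (lc f t c g A)) = lc (partial i (partial i f)) t c (\<lambda>j. partial i (partial i (g j))) A" for i
    using assms by (simp add: partial_lc smooth_lined smooth_partial)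
  then show ?thesis unfolding lap_def
    by (simp add: lc_def sum.distrib sum_distrib_left sum.swap[of _ UNIV A])
qed

lemma forall_split: assumes "\<And>j. j \<noteq> i \<Longrightarrow> P j \<longleftrightarrow> R j" "P i \<and> Q \<longleftrightarrow> R i \<and> Q'"
  shows "((\<forall>j. P j) \<and> Q) \<longleftrightarrow> ((\<forall>j. R j) \<and> Q')"
  using assms by metis

lemma cont_int: fixes f :: "'a::euclidean_space \<Rightarrow> 'b::banach"
  shows "continuous_on UNIV f \<Longrightarrow> f integrable_on cbox a b"
  by (meson continuous_on_subset integrable_continuous subset_UNIV)

lemma int_partial_zero:
  fixes h :: "real^'d::finite \<Rightarrow> complex"
  assumes L: "\<forall>j. L$j > 0" and hc: "continuous_on UNIV h" and dc: "continuous_on UNIV (partial i h)"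
    and hl: "lined i h" and hp: "periodic_fun L h"
  shows "integral (cbox 0 L) (partial i h) = 0"
proof -
  define e where "e = (axis i 1 :: real^'d)"
  have eB: "e \<in> Basis" unfolding e_def by simp
  have xe: "x \<bullet> e = x $ i" for x unfolding e_def by (simp add: inner_axis)
  have ej: "e $ j = (if j = i then 1 else 0)" for j unfolding e_def axis_def by simp
  define F where "F t = integral (cbox 0 L) (\<lambda>x. h (x + t *\<^sub>R e))" for t
  have int: "h integrable_on cbox a b" for a b by (rule cont_int[OF hc])
  have transl: "integral (cbox (a - c) (b - c)) (\<lambda>x. h (x + c)) = integral (cbox a b) h" for a b c
    using has_integral_affinity'[OF integrable_integral[OF int], of 1 c] by (simp add: integral_unique)
  have Fconst: "F t = F 0" if t: "0 \<le> t" "t \<le> L$i" for t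
  proof -
    have "F t = integral (cbox (t *\<^sub>R e - t *\<^sub>R e) (L + t *\<^sub>R e - t *\<^sub>R e)) (\<lambda>x. h (x + t *\<^sub>R e))"
      by (simp add: F_def)
    also have "\<dots> = integral (cbox (t *\<^sub>R e) (L + t *\<^sub>R e)) h" by (rule transl)
    also have "\<dots> = integral (cbox (t *\<^sub>R e) (L + t *\<^sub>R e) \<inter> {x. x \<bullet> e \<le> L$i}) h
        + integral (cbox (t *\<^sub>R e) (L + t *\<^sub>R e) \<inter> {x. x \<bullet> e \<ge> L$i}) h"
      by (rule integral_split[OF int eB])
    also have "cbox (t *\<^sub>R e) (L + t *\<^sub>R e) \<inter> {x. x \<bullet> e \<le> L$i} = cbox 0 L \<inter> {x. x \<bullet> e \<ge> t}"
    unfolding set_eq_iff Int_iff mem_Collect_eq mem_box_cart xe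
    by (intro allI forall_split[where i=i]) (use t in \<open>auto simp: ej\<close>)
    also have "cbox (t *\<^sub>R e) (L + t *\<^sub>R e) \<inter> {x. x \<bullet> e \<ge> L$i}
        = cbox ((\<chi> j. if j = i then L$i else 0) ) (L + t *\<^sub>R e)"
    unfolding set_eq_iff Int_iff mem_Collect_eq mem_box_cart xe
    by (intro allI forall_split[where i=i and Q'=True, simplified]) (use t in \<open>auto simp: ej\<close>)
    also have v1: "(\<chi> j. if j = i then L$i else 0) - L$i *\<^sub>R e = 0"
      by (auto simp: vec_eq_iff ej)
    have v2: "L + t *\<^sub>R e - L$i *\<^sub>R e = (\<chi> j. if j = i then t else L$j)"
      by (auto simp: vec_eq_iff ej)
    have "integral (cbox ((\<chi> j. if j = i then L$i else 0)) (L + t *\<^sub>R e)) h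
       = integral (cbox 0 (\<chi> j. if j = i then t else L$j)) (\<lambda>x. h (x + L$i *\<^sub>R e))"
      using transl[where a="(\<chi> j. if j = i then L$i else 0)" and b="L + t *\<^sub>R e" and c="L$i *\<^sub>R e"]
      unfolding v1 v2 by simp
    also have "(\<lambda>x. h (x + L$i *\<^sub>R e)) = h" using hp unfolding periodic_fun_def e_def by auto
    also have "cbox 0 (\<chi> j. if j = i then t else L$j)
        = cbox 0 L \<inter> {x. x \<bullet> e \<le> t}"
    unfolding set_eq_iff Int_iff mem_Collect_eq mem_box_cart xe
    by (intro allI forall_split[where i=i and Q=True, simplified]) (use t L in \<open>auto simp: ej\<close>)
    also have "integral (cbox 0 L \<inter> {x. t \<le> x \<bullet> e}) h + integral (cbox 0 L \<inter> {x. x \<bullet> e \<le> t}) h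
        = integral (cbox 0 L) h"
      using integral_split[OF int eB, of 0 L t] by simp
    also have "\<dots> = F 0" by (simp add: F_def)
    finally show ?thesis .
  qed
  have Li: "0 < L$i" using L by auto
  have d1: "(F has_vector_derivative integral (cbox 0 L) (\<lambda>x. partial i h (x + 0 *\<^sub>R e))) (at 0 within {0..L$i})"
    unfolding F_def
  proof (rule leibniz_rule_vector_derivative[where fx = "\<lambda>t x. partial i h (x + t *\<^sub>R e)"])
    show "((\<lambda>t. h (x + t *\<^sub>R e)) has_vector_derivative partial i h (x + t *\<^sub>R e)) (at t within {0..L$i})" for t x
      unfolding e_def by (rule has_vector_derivative_at_within, rule line_deriv[OF hl])
    show "(\<lambda>x. h (x + t *\<^sub>R e)) integrable_on cbox 0 L" for t
      by (rule cont_int, rule continuous_on_compose2[OF hc]) (auto intro!: continuous_intros)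
    show "continuous_on ({0..L $ i} \<times> cbox 0 L) (\<lambda>(t, x). partial i h (x + t *\<^sub>R e))"
    proof -
      have c: "continuous_on UNIV (\<lambda>p::real \<times> (real^'d). partial i h (snd p + fst p *\<^sub>R e))"
        by (rule continuous_on_compose2[OF dc]) (auto intro!: continuous_intros)
      show ?thesis unfolding split_beta by (rule continuous_on_subset[OF c]) auto
    qed
  qed (use Li in auto)
  have d2: "(F has_vector_derivative 0) (at 0 within {0..L$i})"
  proof (rule has_vector_derivative_transform[where f="\<lambda>t. F 0"])
    show "(0::real) \<in> {0..L$i}" using Li by simp
    show "F x = F 0" if "x \<in> {0..L$i}" for x using that by (intro Fconst) auto
  qed simp
  have "integral (cbox 0 L) (\<lambda>x. partial i h (x + 0 *\<^sub>R e)) = 0"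
    using vector_derivative_unique_within_closed_interval[of 0 "L$i" 0 F, unfolded cbox_interval, OF Li _ d1 d2] Li by simp
  then show ?thesis by simp
qed


lemma smooth_int: fixes f :: "real^'d::finite \<Rightarrow> 'b::banach" shows "smooth_fun f \<Longrightarrow> f integrable_on cbox a b"
  by (rule cont_int, erule smooth_cont)

lemma ibp:
  fixes f g :: "real^'d::finite \<Rightarrow> complex"
  assumes L: "\<forall>j. L$j > 0" and sf: "smooth_fun f" and sg: "smooth_fun g"
    and pf: "periodic_fun L f" and pg: "periodic_fun L g"
  shows "integral (cbox 0 L) (\<lambda>x. partial i f x * g x) = - integral (cbox 0 L) (\<lambda>x. f x * partial i g x)"
proof -
  let ?h = "\<lambda>x. f x * g x"
  have sh: "smooth_fun ?h" by (rule smooth_mult[OF sf sg])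
  have ph: "partial i ?h = (\<lambda>x. f x * partial i g x + partial i f x * g x)"
    by (rule partial_mult(1)[OF smooth_lined[OF sf] smooth_lined[OF sg]])
  have "integral (cbox 0 L) (partial i ?h) = 0"
    by (rule int_partial_zero[OF L smooth_cont[OF sh] smooth_cont[OF smooth_partial[OF sh]] smooth_lined[OF sh]
          periodic2[OF pf pg]])
  moreover have "integral (cbox 0 L) (partial i ?h) = integral (cbox 0 L) (\<lambda>x. f x * partial i g x)
      + integral (cbox 0 L) (\<lambda>x. partial i f x * g x)"
    unfolding ph
    by (rule integral_add; rule smooth_int; intro smooth_mult smooth_partial sf sg)
  ultimately show ?thesis by (simp add: algebra_simps eq_neg_iff_add_eq_0)
qed

lemma lap_sym:
  fixes f g :: "real^'d::finite \<Rightarrow> complex"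
  assumes L: "\<forall>j. L$j > 0" and sf: "smooth_fun f" and sg: "smooth_fun g"
    and pf: "periodic_fun L f" and pg: "periodic_fun L g"
  shows "ip L (lap f) g = ip L f (lap g)"
proof -
  define G where "G = (\<lambda>x. cnj (g x))"
  have sG: "smooth_fun G" unfolding G_def by (rule smooth_blin[OF bounded_linear_cnj sg])
  have pG: "periodic_fun L G" unfolding G_def by (rule periodic1[OF pg])
  have pGi: "partial i G = (\<lambda>x. cnj (partial i g x))" for i
    unfolding G_def by (rule partial_blin(1)[OF bounded_linear_cnj smooth_lined[OF sg]])
  have pGii: "partial i (partial i G) = (\<lambda>x. cnj (partial i (partial i g) x))" for i
    unfolding pGi by (rule partial_blin(1)[OF bounded_linear_cnj smooth_lined[OF smooth_partial[OF sg]]])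
  have "ip L (lap f) g = integral (cbox 0 L) (\<lambda>x. \<Sum>i\<in>UNIV. partial i (partial i f) x * G x)"
    unfolding ip_def lap_def G_def by (simp add: sum_distrib_right)
  also have "\<dots> = (\<Sum>i\<in>UNIV. integral (cbox 0 L) (\<lambda>x. partial i (partial i f) x * G x))"
    by (rule integral_sum) (auto intro!: smooth_int smooth_mult smooth_partial sf sG)
  also have "\<dots> = (\<Sum>i\<in>UNIV. - integral (cbox 0 L) (\<lambda>x. partial i f x * partial i G x))"
    by (rule sum.cong[OF refl], rule ibp[OF L smooth_partial[OF sf] sG partial_periodic[OF pf] pG])
  also have "\<dots> = (\<Sum>i\<in>UNIV. integral (cbox 0 L) (\<lambda>x. f x * partial i (partial i G) x))"
    by (rule sum.cong[OF refl], subst ibp[OF L sf smooth_partial[OF sG] pf partial_periodic[OF pG]]) simp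
  also have "\<dots> = integral (cbox 0 L) (\<lambda>x. \<Sum>i\<in>UNIV. f x * partial i (partial i G) x)"
    by (rule integral_sum[symmetric]) (auto intro!: smooth_int smooth_mult smooth_partial sf sG)
  also have "\<dots> = ip L f (lap g)"
    unfolding ip_def lap_def pGii by (simp add: sum_distrib_left)
  finally show ?thesis .
qed


definition SS :: "real^'d::finite \<Rightarrow> real \<Rightarrow> (real^'d \<Rightarrow> complex) \<Rightarrow> (real^'d \<Rightarrow> complex) \<Rightarrow> (real^'d \<Rightarrow> complex)
   \<Rightarrow> (real^'d \<Rightarrow> complex) \<Rightarrow> (real^'d \<Rightarrow> complex) \<Rightarrow> (real^'d \<Rightarrow> complex) \<Rightarrow> (real^'d \<Rightarrow> complex)
   \<Rightarrow> (real^'d \<Rightarrow> complex) \<Rightarrow> complex" where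
  "SS L \<epsilon> E N V Q E' N' V' Q' = ip L (lap E) E' - of_real (\<epsilon>^2) * ip L (lap E) (lap E')
     - 1/2 * ip L N N' + of_real (\<epsilon>^2) / 2 * ip L (lap N) N' - 1/2 * ip L N Q' - 1/2 * ip L Q N'
     + 1/2 * ip L (lap V) V'"

lemma ip_has: "continuous_on UNIV f \<Longrightarrow> continuous_on UNIV g \<Longrightarrow>
  ((\<lambda>x. f x * cnj (g x)) has_integral ip L f g) (cbox 0 L)"
  unfolding ip_def by (rule integrable_integral, rule cont_int) (auto intro!: continuous_intros)

lemma ip_has_cnj: "continuous_on UNIV f \<Longrightarrow> continuous_on UNIV g \<Longrightarrow>
  ((\<lambda>x. cnj (f x * cnj (g x))) has_integral cnj (ip L f g)) (cbox 0 L)"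
  using ip_has[of f g L] has_integral_cnj[of "\<lambda>x. f x * cnj (g x)" "ip L f g" "cbox 0 L"]
  by (simp add: comp_def)

lemma ip_lc1:
  assumes "continuous_on UNIV f" "continuous_on UNIV h" "\<And>j. j \<in> A \<Longrightarrow> continuous_on UNIV (g j)" "finite A"
  shows "ip L (lc f t c g A) h = ip L f h + of_real t * (\<Sum>j\<in>A. of_real (c j) * ip L (g j) h)"
proof -
  have "((\<lambda>x. f x * cnj (h x) + of_real t * (\<Sum>j\<in>A. of_real (c j) * (g j x * cnj (h x)))) has_integral
       (ip L f h + of_real t * (\<Sum>j\<in>A. of_real (c j) * ip L (g j) h))) (cbox 0 L)"
    using assms
    by (intro has_integral_add has_integral_mult_right has_integral_sum ip_has) auto
  moreover have "(\<lambda>x. f x * cnj (h x) + of_real t * (\<Sum>j\<in>A. of_real (c j) * (g j x * cnj (h x))))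
      = (\<lambda>x. lc f t c g A x * cnj (h x))"
    unfolding lc_def by (simp add: fun_eq_iff distrib_right sum_distrib_right mult.assoc)
  ultimately show ?thesis unfolding ip_def by (simp add: integral_unique)
qed

lemma ip_lc2:
  assumes "continuous_on UNIV f" "continuous_on UNIV h" "\<And>j. j \<in> A \<Longrightarrow> continuous_on UNIV (g j)" "finite A"
  shows "ip L h (lc f t c g A) = ip L h f + of_real t * (\<Sum>j\<in>A. of_real (c j) * ip L h (g j))"
proof -
  have "((\<lambda>x. h x * cnj (f x) + of_real t * (\<Sum>j\<in>A. of_real (c j) * (h x * cnj (g j x)))) has_integral
       (ip L h f + of_real t * (\<Sum>j\<in>A. of_real (c j) * ip L h (g j)))) (cbox 0 L)"
    using assms
    by (intro has_integral_add has_integral_mult_right has_integral_sum ip_has) auto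
  moreover have "(\<lambda>x. h x * cnj (f x) + of_real t * (\<Sum>j\<in>A. of_real (c j) * (h x * cnj (g j x))))
      = (\<lambda>x. h x * cnj (lc f t c g A x))"
    unfolding lc_def by (simp add: fun_eq_iff distrib_left sum_distrib_left cnj_sum algebra_simps)
  ultimately show ?thesis unfolding ip_def by (simp add: integral_unique)
qed

lemma ip_cnj: "ip L g f = cnj (ip L f g)"
  unfolding ip_def integral_cnj by (simp add: mult.commute)

lemma ip_real_sym: "ip L (cx f) (cx g) = ip L (cx g) (cx f)"
  unfolding ip_def cx_def by (simp add: mult.commute)

lemma rk_alg:
  fixes P R c B :: "nat \<Rightarrow> complex" and M A :: "nat \<Rightarrow> nat \<Rightarrow> complex" and T S0 :: complex
  assumes symp: "\<forall>i\<in>{1..s}. \<forall>j\<in>{1..s}. B i * A i j + B j * A j i = B i * B j"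
    and st: "\<forall>i\<in>{1..s}. (P i + T * (\<Sum>j=1..s. A i j * M j i)) + (R i + T * (\<Sum>j=1..s. A i j * M i j)) = c i"
  shows "S0 + T * (\<Sum>i=1..s. B i * (P i + R i)) + T^2 * (\<Sum>i=1..s. \<Sum>j=1..s. B i * B j * M i j)
       = S0 + T * (\<Sum>i=1..s. B i * c i)"
proof -
  have 1: "(\<Sum>i=1..s. B i * (P i + R i)) = (\<Sum>i=1..s. B i * c i)
      - T * (\<Sum>i=1..s. \<Sum>j=1..s. B i * A i j * M j i + B i * A i j * M i j)"
  proof -
    have "(\<Sum>i=1..s. B i * (P i + R i)) = (\<Sum>i=1..s. B i * c i - T * (\<Sum>j=1..s. B i * A i j * M j i + B i * A i j * M i j))"
    proof (rule sum.cong[OF refl])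
      fix i assume i: "i \<in> {1..s}"
      have h: "P i + R i = c i - T * (\<Sum>j=1..s. A i j * M j i) - T * (\<Sum>j=1..s. A i j * M i j)"
        using st i by (simp add: algebra_simps)
      show "B i * (P i + R i) = B i * c i - T * (\<Sum>j=1..s. B i * A i j * M j i + B i * A i j * M i j)"
        unfolding h by (simp add: algebra_simps sum.distrib sum_distrib_left)
    qed
    then show ?thesis by (simp add: sum_subtractf sum_distrib_left)
  qed
  have 2: "(\<Sum>i=1..s. \<Sum>j=1..s. B i * A i j * M j i) = (\<Sum>i=1..s. \<Sum>j=1..s. B j * A j i * M i j)"
    by (rule sum.swap[of "\<lambda>i j. B i * A i j * M j i" "{1..s}" "{1..s}"])
  have 3: "(\<Sum>i=1..s. \<Sum>j=1..s. B i * A i j * M j i + B i * A i j * M i j) = (\<Sum>i=1..s. \<Sum>j=1..s. B i * B j * M i j)"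
  proof -
    have "(\<Sum>i=1..s. \<Sum>j=1..s. B i * A i j * M j i + B i * A i j * M i j)
        = (\<Sum>i=1..s. \<Sum>j=1..s. B j * A j i * M i j) + (\<Sum>i=1..s. \<Sum>j=1..s. B i * A i j * M i j)"
      by (simp only: sum.distrib 2)
    also have "\<dots> = (\<Sum>i=1..s. \<Sum>j=1..s. (B i * A i j + B j * A j i) * M i j)"
      by (simp only: distrib_right sum.distrib) (simp add: add.commute)
    also have "\<dots> = (\<Sum>i=1..s. \<Sum>j=1..s. B i * B j * M i j)"
      using symp by (intro sum.cong refl) auto
    finally show ?thesis .
  qed
  show ?thesis unfolding 1 3 by (simp add: algebra_simps power2_eq_square)
qed

lemma pw_identity:
  fixes A B e k :: complex and n n2 ln qq n3 n4 \<epsilon>2 :: real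
  assumes k: "k = \<i> * (A - of_real \<epsilon>2 * B - of_real n * e)"
    and n3: "n3 = n - \<epsilon>2 * ln + qq" and n4: "n4 = 2 * Re (cnj e * k)"
  shows "A * cnj k + cnj (A * cnj k) - of_real \<epsilon>2 * (B * cnj k + cnj (B * cnj k))
     - of_real n * of_real n2 + of_real \<epsilon>2 * (of_real ln * of_real n2)
     - of_real n * of_real n4 - of_real qq * of_real n2 + of_real n2 * of_real n3 = 0"
proof -
  have A: "A = of_real \<epsilon>2 * B + of_real n * e - \<i> * k"
    using k by (simp add: complex_eq_iff algebra_simps)
  show ?thesis unfolding A n3 n4
    by (simp add: complex_eq_iff algebra_simps)
qed


lemma smooth_cmult: fixes f :: "real^'d::finite \<Rightarrow> 'b::real_normed_algebra"
  shows "smooth_fun f \<Longrightarrow> smooth_fun (\<lambda>x. c * f x)"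
  by (rule smooth_blin[OF bounded_linear_mult_right])

lemma smooth_neg: "smooth_fun f \<Longrightarrow> smooth_fun (\<lambda>x. - f x)"
  by (rule smooth_blin[OF bounded_linear_minus[OF bounded_linear_ident]])

lemma smooth_diff: "smooth_fun f \<Longrightarrow> smooth_fun g \<Longrightarrow> smooth_fun (\<lambda>x. f x - g x)"
  using smooth_add[OF _ smooth_neg, of f g] by simp

lemma smooth_ofreal: "smooth_fun f \<Longrightarrow> smooth_fun (\<lambda>x. (of_real (f x) :: complex))"
  by (rule smooth_blin[OF bounded_linear_of_real])

lemma smooth_cnj: "smooth_fun f \<Longrightarrow> smooth_fun (\<lambda>x. cnj (f x))"
  by (rule smooth_blin[OF bounded_linear_cnj])

lemma smooth_Re: "smooth_fun f \<Longrightarrow> smooth_fun (\<lambda>x. Re (f x))"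
  by (rule smooth_blin[OF bounded_linear_Re])

lemma smooth_cx: "smooth_fun f \<Longrightarrow> smooth_fun (cx f)"
  unfolding cx_def by (rule smooth_ofreal)

lemma periodic_cx: "periodic_fun L f \<Longrightarrow> periodic_fun L (cx f)"
  unfolding cx_def by (rule periodic1)

lemma lap_cx: "smooth_fun f \<Longrightarrow> lap (cx f) = cx (lap f)"
  unfolding cx_def by (rule lap_blin[OF bounded_linear_of_real])

lemma SS_lc1:
  assumes sY: "smooth_fun E" "smooth_fun N" "smooth_fun V" "smooth_fun Q"
    and sg: "\<And>j. j \<in> A \<Longrightarrow> smooth_fun (g1 j) \<and> smooth_fun (g2 j) \<and> smooth_fun (g3 j) \<and> smooth_fun (g4 j)"
    and A: "finite A"
    and sZ: "smooth_fun E'" "smooth_fun N'" "smooth_fun V'" "smooth_fun Q'"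
  shows "SS L \<epsilon> (lc E t c g1 A) (lc N t c g2 A) (lc V t c g3 A) (lc Q t c g4 A) E' N' V' Q'
    = SS L \<epsilon> E N V Q E' N' V' Q' + of_real t * (\<Sum>j\<in>A. of_real (c j) * SS L \<epsilon> (g1 j) (g2 j) (g3 j) (g4 j) E' N' V' Q')"
proof -
  note sc = smooth_cont
  have lE: "lap (lc E t c g1 A) = lc (lap E) t c (\<lambda>j. lap (g1 j)) A"
    by (rule lap_lc) (use sY sg in auto)
  have lN: "lap (lc N t c g2 A) = lc (lap N) t c (\<lambda>j. lap (g2 j)) A"
    by (rule lap_lc) (use sY sg in auto)
  have lV: "lap (lc V t c g3 A) = lc (lap V) t c (\<lambda>j. lap (g3 j)) A"
    by (rule lap_lc) (use sY sg in auto)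
  have i1: "ip L (lc (lap E) t c (\<lambda>j. lap (g1 j)) A) E' = ip L (lap E) E' + of_real t * (\<Sum>j\<in>A. of_real (c j) * ip L (lap (g1 j)) E')"
    by (rule ip_lc1) (use sY sg sZ A in \<open>auto intro!: sc smooth_lap\<close>)
  have i2: "ip L (lc (lap E) t c (\<lambda>j. lap (g1 j)) A) (lap E') = ip L (lap E) (lap E') + of_real t * (\<Sum>j\<in>A. of_real (c j) * ip L (lap (g1 j)) (lap E'))"
    by (rule ip_lc1) (use sY sg sZ A in \<open>auto intro!: sc smooth_lap\<close>)
  have i3: "ip L (lc N t c g2 A) N' = ip L N N' + of_real t * (\<Sum>j\<in>A. of_real (c j) * ip L (g2 j) N')"
    by (rule ip_lc1) (use sY sg sZ A in \<open>auto intro!: sc smooth_lap\<close>)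
  have i4: "ip L (lc (lap N) t c (\<lambda>j. lap (g2 j)) A) N' = ip L (lap N) N' + of_real t * (\<Sum>j\<in>A. of_real (c j) * ip L (lap (g2 j)) N')"
    by (rule ip_lc1) (use sY sg sZ A in \<open>auto intro!: sc smooth_lap\<close>)
  have i5: "ip L (lc N t c g2 A) Q' = ip L N Q' + of_real t * (\<Sum>j\<in>A. of_real (c j) * ip L (g2 j) Q')"
    by (rule ip_lc1) (use sY sg sZ A in \<open>auto intro!: sc smooth_lap\<close>)
  have i6: "ip L (lc Q t c g4 A) N' = ip L Q N' + of_real t * (\<Sum>j\<in>A. of_real (c j) * ip L (g4 j) N')"
    by (rule ip_lc1) (use sY sg sZ A in \<open>auto intro!: sc smooth_lap\<close>)
  have i7: "ip L (lc (lap V) t c (\<lambda>j. lap (g3 j)) A) V' = ip L (lap V) V' + of_real t * (\<Sum>j\<in>A. of_real (c j) * ip L (lap (g3 j)) V')"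
    by (rule ip_lc1) (use sY sg sZ A in \<open>auto intro!: sc smooth_lap\<close>)
  show ?thesis
    unfolding SS_def lE lN lV i1 i2 i3 i4 i5 i6 i7
    by (simp add: algebra_simps sum_distrib_left sum.distrib sum_subtractf)
qed

lemma SS_lc2:
  assumes sY: "smooth_fun E" "smooth_fun N" "smooth_fun V" "smooth_fun Q"
    and sg: "\<And>j. j \<in> A \<Longrightarrow> smooth_fun (g1 j) \<and> smooth_fun (g2 j) \<and> smooth_fun (g3 j) \<and> smooth_fun (g4 j)"
    and A: "finite A"
    and sZ: "smooth_fun E'" "smooth_fun N'" "smooth_fun V'" "smooth_fun Q'"
  shows "SS L \<epsilon> E' N' V' Q' (lc E t c g1 A) (lc N t c g2 A) (lc V t c g3 A) (lc Q t c g4 A)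
    = SS L \<epsilon> E' N' V' Q' E N V Q + of_real t * (\<Sum>j\<in>A. of_real (c j) * SS L \<epsilon> E' N' V' Q' (g1 j) (g2 j) (g3 j) (g4 j))"
proof -
  note sc = smooth_cont
  have lE: "lap (lc E t c g1 A) = lc (lap E) t c (\<lambda>j. lap (g1 j)) A"
    by (rule lap_lc) (use sY sg in auto)
  have i1: "ip L (lap E') (lc E t c g1 A) = ip L (lap E') E + of_real t * (\<Sum>j\<in>A. of_real (c j) * ip L (lap E') (g1 j))"
    by (rule ip_lc2) (use sY sg sZ A in \<open>auto intro!: sc smooth_lap\<close>)
  have i2: "ip L (lap E') (lc (lap E) t c (\<lambda>j. lap (g1 j)) A) = ip L (lap E') (lap E) + of_real t * (\<Sum>j\<in>A. of_real (c j) * ip L (lap E') (lap (g1 j)))"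
    by (rule ip_lc2) (use sY sg sZ A in \<open>auto intro!: sc smooth_lap\<close>)
  have i3: "ip L N' (lc N t c g2 A) = ip L N' N + of_real t * (\<Sum>j\<in>A. of_real (c j) * ip L N' (g2 j))"
    by (rule ip_lc2) (use sY sg sZ A in \<open>auto intro!: sc smooth_lap\<close>)
  have i4: "ip L (lap N') (lc N t c g2 A) = ip L (lap N') N + of_real t * (\<Sum>j\<in>A. of_real (c j) * ip L (lap N') (g2 j))"
    by (rule ip_lc2) (use sY sg sZ A in \<open>auto intro!: sc smooth_lap\<close>)
  have i5: "ip L N' (lc Q t c g4 A) = ip L N' Q + of_real t * (\<Sum>j\<in>A. of_real (c j) * ip L N' (g4 j))"
    by (rule ip_lc2) (use sY sg sZ A in \<open>auto intro!: sc smooth_lap\<close>)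
  have i6: "ip L Q' (lc N t c g2 A) = ip L Q' N + of_real t * (\<Sum>j\<in>A. of_real (c j) * ip L Q' (g2 j))"
    by (rule ip_lc2) (use sY sg sZ A in \<open>auto intro!: sc smooth_lap\<close>)
  have i7: "ip L (lap V') (lc V t c g3 A) = ip L (lap V') V + of_real t * (\<Sum>j\<in>A. of_real (c j) * ip L (lap V') (g3 j))"
    by (rule ip_lc2) (use sY sg sZ A in \<open>auto intro!: sc smooth_lap\<close>)
  show ?thesis
    unfolding SS_def lE i1 i2 i3 i4 i5 i6 i7
    by (simp add: algebra_simps sum_distrib_left sum.distrib sum_subtractf)
qed


lemma pw2:
  fixes A B e k :: complex and n nb ln qq nc nd eps :: real
  assumes k: "k = \<i> * (A - of_real eps * B - of_real n * e)"
    and nc: "nc = n - eps * ln + qq" and nd: "nd = 2 * Re (cnj e * k)"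
  shows "A * cnj k - of_real eps * (B * cnj k) - 1/2 * (of_real n * cnj (of_real nb))
     + of_real eps / 2 * (of_real ln * cnj (of_real nb)) - 1/2 * (of_real n * cnj (of_real nd)) - 1/2 * (of_real qq * cnj (of_real nb))
     + 1/2 * (of_real nb * cnj (of_real nc))
     + (cnj (A * cnj k) - of_real eps * cnj (B * cnj k) - 1/2 * (of_real nb * cnj (of_real n))
     + of_real eps / 2 * (of_real nb * cnj (of_real ln)) - 1/2 * (of_real nb * cnj (of_real qq)) - 1/2 * (of_real nd * cnj (of_real n))
     + 1/2 * (of_real nc * cnj (of_real nb))) = 0"
proof -
  have A: "A = of_real eps * B + of_real n * e - \<i> * k"
    using k by (simp add: complex_eq_iff algebra_simps)
  show ?thesis unfolding A nc nd
    by (simp add: complex_eq_iff algebra_simps)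
qed

lemma stage_zero:
  fixes Es k1 :: "real^'d::finite \<Rightarrow> complex" and Ns vs Qs k2 k3 k4 :: "real^'d \<Rightarrow> real"
  assumes L: "\<forall>j. L$j > 0"
    and sm: "smooth_fun Es" "smooth_fun Ns" "smooth_fun vs" "smooth_fun Qs"
    and pe: "periodic_fun L Es" "periodic_fun L Ns" "periodic_fun L vs" "periodic_fun L Qs"
    and k1: "k1 = (\<lambda>x. \<i> * (lap Es x - of_real (\<epsilon>^2) * lap (lap Es) x - of_real (Ns x) * Es x))"
    and k2: "k2 = lap vs"
    and k3: "k3 = (\<lambda>x. Ns x - \<epsilon>^2 * lap Ns x + Qs x)"
    and k4: "k4 = (\<lambda>x. 2 * Re (cnj (Es x) * k1 x))"
  shows "SS L \<epsilon> Es (cx Ns) (cx vs) (cx Qs) k1 (cx k2) (cx k3) (cx k4)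
       + SS L \<epsilon> k1 (cx k2) (cx k3) (cx k4) Es (cx Ns) (cx vs) (cx Qs) = 0"
proof -
  have sk1: "smooth_fun k1" unfolding k1
    by (intro smooth_cmult smooth_diff smooth_lap smooth_mult smooth_ofreal sm)
  have sk2: "smooth_fun k2" unfolding k2 by (intro smooth_lap sm)
  have sk3: "smooth_fun k3" unfolding k3 by (intro smooth_add smooth_diff smooth_cmult smooth_lap sm)
  have sk4: "smooth_fun k4" unfolding k4 by (intro smooth_cmult smooth_Re smooth_mult smooth_cnj sk1 sm)
  have pk1: "periodic_fun L k1"
    using periodic_lap[OF pe(1)] periodic_lap[OF periodic_lap[OF pe(1)]] pe unfolding k1 periodic_fun_def by simp
  have pk2: "periodic_fun L k2" unfolding k2 by (rule periodic_lap[OF pe(3)])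
  have pk3: "periodic_fun L k3"
    using periodic_lap[OF pe(2)] pe unfolding k3 periodic_fun_def by simp
  have pk4: "periodic_fun L k4"
    using pk1 pe unfolding k4 periodic_fun_def by simp
  have lcN: "lap (cx Ns) = cx (lap Ns)" by (rule lap_cx[OF sm(2)])
  have lcv: "lap (cx vs) = cx k2" unfolding k2 by (rule lap_cx[OF sm(3)])
  have lck2: "lap (cx k2) = cx (lap k2)" by (rule lap_cx[OF sk2])
  have lck3: "lap (cx k3) = cx (lap k3)" by (rule lap_cx[OF sk3])
  have f1: "ip L (lap k1) Es = cnj (ip L (lap Es) k1)"
    using lap_sym[OF L sk1 sm(1) pk1 pe(1)] ip_cnj[of L k1 "lap Es"] by simp
  have f2: "ip L (lap k1) (lap Es) = cnj (ip L (lap (lap Es)) k1)"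
    using lap_sym[OF L sk1 smooth_lap[OF sm(1)] pk1 periodic_lap[OF pe(1)]] ip_cnj[of L k1 "lap (lap Es)"] by simp
  have f3: "ip L (lap Es) (lap k1) = ip L (lap (lap Es)) k1"
    using lap_sym[OF L smooth_lap[OF sm(1)] sk1 periodic_lap[OF pe(1)] pk1] by simp
  have f4: "ip L (cx (lap k2)) (cx Ns) = ip L (cx k2) (cx (lap Ns))"
    using lap_sym[OF L smooth_cx[OF sk2] smooth_cx[OF sm(2)] periodic_cx[OF pk2] periodic_cx[OF pe(2)]]
    unfolding lck2 lcN .
  have f5: "ip L (cx (lap k3)) (cx vs) = ip L (cx k3) (cx k2)"
    using lap_sym[OF L smooth_cx[OF sk3] smooth_cx[OF sm(3)] periodic_cx[OF pk3] periodic_cx[OF pe(3)]]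
    unfolding lck3 lcv .
  let ?T = "ip L (lap Es) k1 - of_real (\<epsilon>^2) * ip L (lap (lap Es)) k1 - 1/2 * ip L (cx Ns) (cx k2)
     + of_real (\<epsilon>^2) / 2 * ip L (cx (lap Ns)) (cx k2) - 1/2 * ip L (cx Ns) (cx k4) - 1/2 * ip L (cx Qs) (cx k2)
     + 1/2 * ip L (cx k2) (cx k3)
     + (cnj (ip L (lap Es) k1) - of_real (\<epsilon>^2) * cnj (ip L (lap (lap Es)) k1) - 1/2 * ip L (cx k2) (cx Ns)
     + of_real (\<epsilon>^2) / 2 * ip L (cx k2) (cx (lap Ns)) - 1/2 * ip L (cx k2) (cx Qs) - 1/2 * ip L (cx k4) (cx Ns)
     + 1/2 * ip L (cx k3) (cx k2))"
  have eq: "SS L \<epsilon> Es (cx Ns) (cx vs) (cx Qs) k1 (cx k2) (cx k3) (cx k4)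
       + SS L \<epsilon> k1 (cx k2) (cx k3) (cx k4) Es (cx Ns) (cx vs) (cx Qs) = ?T"
    unfolding SS_def lcN lcv lck2 lck3 f1 f2 f3 f4 f5 by simp
  let ?I = "\<lambda>x. lap Es x * cnj (k1 x) - of_real (\<epsilon>^2) * (lap (lap Es) x * cnj (k1 x)) - 1/2 * (cx Ns x * cnj (cx k2 x))
     + of_real (\<epsilon>^2) / 2 * (cx (lap Ns) x * cnj (cx k2 x)) - 1/2 * (cx Ns x * cnj (cx k4 x)) - 1/2 * (cx Qs x * cnj (cx k2 x))
     + 1/2 * (cx k2 x * cnj (cx k3 x))
     + (cnj (lap Es x * cnj (k1 x)) - of_real (\<epsilon>^2) * cnj (lap (lap Es) x * cnj (k1 x)) - 1/2 * (cx k2 x * cnj (cx Ns x))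
     + of_real (\<epsilon>^2) / 2 * (cx k2 x * cnj (cx (lap Ns) x)) - 1/2 * (cx k2 x * cnj (cx Qs x)) - 1/2 * (cx k4 x * cnj (cx Ns x))
     + 1/2 * (cx k3 x * cnj (cx k2 x)))"
  have hi: "(?I has_integral ?T) (cbox 0 L)"
    by (intro has_integral_add has_integral_diff has_integral_mult_right ip_has ip_has_cnj)
       (auto intro!: smooth_cont smooth_cx smooth_lap sk1 sk2 sk3 sk4 sm)
  have pw: "?I x = 0" for x
    unfolding cx_def
    by (rule pw2[where A="lap Es x" and B="lap (lap Es) x" and e="Es x" and k="k1 x" and n="Ns x" and nb="k2 x"
          and ln="lap Ns x" and qq="Qs x" and nc="k3 x" and nd="k4 x" and eps="\<epsilon>^2"])
       (simp_all add: k1 k3 k4)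
  have I0: "?I = (\<lambda>x. 0)" by (rule ext) (rule pw)
  have "((\<lambda>x. 0) has_integral ?T) (cbox 0 L)" using hi unfolding I0 .
  then have "?T = 0" by (rule has_integral_unique[OF _ has_integral_0])
  then show ?thesis using eq by simp
qed


lemma stage_smooth:
  fixes Es k1 :: "real^'d::finite \<Rightarrow> complex" and Ns vs Qs k2 k3 k4 :: "real^'d \<Rightarrow> real"
  assumes sm: "smooth_fun Es" "smooth_fun Ns" "smooth_fun vs" "smooth_fun Qs"
    and k1: "k1 = (\<lambda>x. \<i> * (lap Es x - of_real (\<epsilon>^2) * lap (lap Es) x - of_real (Ns x) * Es x))"
    and k2: "k2 = lap vs"
    and k3: "k3 = (\<lambda>x. Ns x - \<epsilon>^2 * lap Ns x + Qs x)"
    and k4: "k4 = (\<lambda>x. 2 * Re (cnj (Es x) * k1 x))"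
  shows "smooth_fun k1 \<and> smooth_fun (cx k2) \<and> smooth_fun (cx k3) \<and> smooth_fun (cx k4)"
proof -
  have sk1: "smooth_fun k1" unfolding k1
    by (intro smooth_cmult smooth_diff smooth_lap smooth_mult smooth_ofreal sm)
  have sk2: "smooth_fun k2" unfolding k2 by (intro smooth_lap sm)
  have sk3: "smooth_fun k3" unfolding k3 by (intro smooth_add smooth_diff smooth_cmult smooth_lap sm)
  have sk4: "smooth_fun k4" unfolding k4 by (intro smooth_cmult smooth_Re smooth_mult smooth_cnj sk1 sm)
  show ?thesis using sk1 sk2 sk3 sk4 by (simp add: smooth_cx)
qed

lemma add_cnj_lem: "z * cnj k + k * cnj z = complex_of_real (2 * Re (cnj z * k))"
  by (simp add: complex_eq_iff algebra_simps)

lemma step_q: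
  fixes E E' :: "real^'d::finite \<Rightarrow> complex" and q q' :: "real^'d \<Rightarrow> real"
    and Es k1 :: "nat \<Rightarrow> real^'d \<Rightarrow> complex" and k4 :: "nat \<Rightarrow> real^'d \<Rightarrow> real"
  assumes symp: "\<forall>i\<in>{1..s}. \<forall>j\<in>{1..s}. b i * a i j + b j * a j i = b i * b j"
    and stE: "\<forall>i\<in>{1..s}. Es i = (\<lambda>x. E x + of_real \<tau> * (\<Sum>j=1..s. of_real (a i j) * k1 j x))"
    and stk4: "\<forall>i\<in>{1..s}. k4 i = (\<lambda>x. 2 * Re (cnj (Es i x) * k1 i x))"
    and upE: "E' = (\<lambda>x. E x + of_real \<tau> * (\<Sum>i=1..s. of_real (b i) * k1 i x))"
    and upq: "q' = (\<lambda>x. q x + \<tau> * (\<Sum>i=1..s. b i * k4 i x))"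
    and inv: "q x = (cmod (E x))^2"
  shows "q' x = (cmod (E' x))^2"
proof -
  define T where "T = (of_real \<tau> :: complex)"
  define B where "B i = (of_real (b i) :: complex)" for i
  define A where "A i j = (of_real (a i j) :: complex)" for i j
  define P where "P i = E x * cnj (k1 i x)" for i
  define R where "R i = k1 i x * cnj (E x)" for i
  define M where "M i j = k1 i x * cnj (k1 j x)" for i j
  define c where "c i = (of_real (k4 i x) :: complex)" for i
  define X where "X = (\<Sum>i=1..s. B i * k1 i x)"
  define Y where "Y = (\<Sum>i=1..s. B i * cnj (k1 i x))"
  have symp': "\<forall>i\<in>{1..s}. \<forall>j\<in>{1..s}. B i * A i j + B j * A j i = B i * B j"
    using symp unfolding A_def B_def by (auto simp flip: of_real_mult of_real_add)
  have st: "\<forall>i\<in>{1..s}. (P i + T * (\<Sum>j=1..s. A i j * M j i)) + (R i + T * (\<Sum>j=1..s. A i j * M i j)) = c i"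
  proof
    fix i assume i: "i \<in> {1..s}"
    have h1: "Es i x * cnj (k1 i x) = P i + T * (\<Sum>j=1..s. A i j * M j i)"
      using stE i unfolding P_def T_def A_def M_def
      by (simp add: algebra_simps sum_distrib_left sum_distrib_right)
    have h2: "k1 i x * cnj (Es i x) = R i + T * (\<Sum>j=1..s. A i j * M i j)"
      using stE i unfolding R_def T_def A_def M_def
      by (simp add: algebra_simps sum_distrib_left sum_distrib_right)
    have "Es i x * cnj (k1 i x) + k1 i x * cnj (Es i x) = c i"
      unfolding add_cnj_lem c_def using stk4 i by simp
    then show "(P i + T * (\<Sum>j=1..s. A i j * M j i)) + (R i + T * (\<Sum>j=1..s. A i j * M i j)) = c i"
      unfolding h1 h2 .
  qed
  have rk: "E x * cnj (E x) + T * (\<Sum>i=1..s. B i * (P i + R i)) + T^2 * (\<Sum>i=1..s. \<Sum>j=1..s. B i * B j * M i j)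
      = E x * cnj (E x) + T * (\<Sum>i=1..s. B i * c i)"
    by (rule rk_alg[OF symp' st])
  have e1: "E' x = E x + T * X" unfolding upE T_def X_def B_def by simp
  have e2: "cnj (E' x) = cnj (E x) + T * Y" unfolding upE T_def Y_def B_def by simp
  have e3: "E x * Y + X * cnj (E x) = (\<Sum>i=1..s. B i * (P i + R i))"
    unfolding X_def Y_def P_def R_def by (simp add: algebra_simps sum_distrib_left sum_distrib_right sum.distrib)
  have e4: "X * Y = (\<Sum>i=1..s. \<Sum>j=1..s. B i * B j * M i j)"
    unfolding X_def Y_def M_def by (simp add: sum_product algebra_simps)
  have "E' x * cnj (E' x) = E x * cnj (E x) + T * (E x * Y + X * cnj (E x)) + T^2 * (X * Y)"
    unfolding e2 unfolding e1 by (simp add: algebra_simps power2_eq_square)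
  also have "\<dots> = E x * cnj (E x) + T * (\<Sum>i=1..s. B i * c i)"
    unfolding e3 e4 by (rule rk)
  also have "\<dots> = of_real (q' x)"
    unfolding upq T_def B_def c_def using inv complex_norm_square[of "E x"]
    by (simp add: sum_distrib_left)
  finally have "of_real (q' x) = (of_real ((cmod (E' x))^2) :: complex)"
    using complex_norm_square[of "E' x"] by simp
  then show ?thesis using of_real_eq_iff by blast
qed

lemma energy_SS:
  assumes "smooth_fun E" "smooth_fun N" "smooth_fun v" and "\<forall>x. q x = (cmod (E x))^2"
  shows "energy L \<epsilon> E N v = SS L \<epsilon> E (cx N) (cx v) (cx q) E (cx N) (cx v) (cx q)"
proof -
  have qq: "cx q = cx (\<lambda>x. (cmod (E x))^2)" using assms(4) by (simp add: cx_def)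
  have s: "ip L (cx q) (cx N) = ip L (cx N) (cx q)" by (rule ip_real_sym)
  show ?thesis unfolding energy_def SS_def s unfolding lap_cx[OF assms(2)] lap_cx[OF assms(3)] qq
    by (simp add: algebra_simps)
qed


lemma step_energy:
  fixes L :: "real^'d::finite" and E E' :: "real^'d \<Rightarrow> complex" and N v q N' v' q' :: "real^'d \<Rightarrow> real"
    and Es k1 :: "nat \<Rightarrow> real^'d \<Rightarrow> complex" and Ns vs Qs k2 k3 k4 :: "nat \<Rightarrow> real^'d \<Rightarrow> real"
  assumes L: "\<forall>j. L$j > 0"
    and symp: "\<forall>i\<in>{1..s}. \<forall>j\<in>{1..s}. b i * a i j + b j * a j i = b i * b j"
    and stE: "\<forall>i\<in>{1..s}. Es i = (\<lambda>x. E x + of_real \<tau> * (\<Sum>j=1..s. of_real (a i j) * k1 j x))"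
    and stk1: "\<forall>i\<in>{1..s}. k1 i = (\<lambda>x. \<i> * (lap (Es i) x - of_real (\<epsilon>^2) * lap (lap (Es i)) x
                                              - of_real (Ns i x) * Es i x))"
    and stN: "\<forall>i\<in>{1..s}. Ns i = (\<lambda>x. N x + \<tau> * (\<Sum>j=1..s. a i j * k2 j x))"
    and stk2: "\<forall>i\<in>{1..s}. k2 i = lap (vs i)"
    and stv: "\<forall>i\<in>{1..s}. vs i = (\<lambda>x. v x + \<tau> * (\<Sum>j=1..s. a i j * k3 j x))"
    and stk3: "\<forall>i\<in>{1..s}. k3 i = (\<lambda>x. Ns i x - \<epsilon>^2 * lap (Ns i) x + Qs i x)"
    and stQ: "\<forall>i\<in>{1..s}. Qs i = (\<lambda>x. q x + \<tau> * (\<Sum>j=1..s. a i j * k4 j x))"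
    and stk4: "\<forall>i\<in>{1..s}. k4 i = (\<lambda>x. 2 * Re (cnj (Es i x) * k1 i x))"
    and upE: "E' = (\<lambda>x. E x + of_real \<tau> * (\<Sum>i=1..s. of_real (b i) * k1 i x))"
    and upN: "N' = (\<lambda>x. N x + \<tau> * (\<Sum>i=1..s. b i * k2 i x))"
    and upv: "v' = (\<lambda>x. v x + \<tau> * (\<Sum>i=1..s. b i * k3 i x))"
    and upq: "q' = (\<lambda>x. q x + \<tau> * (\<Sum>i=1..s. b i * k4 i x))"
    and reg: "smooth_fun E" "smooth_fun N" "smooth_fun v" "smooth_fun q"
    and reg': "smooth_fun E'" "smooth_fun N'" "smooth_fun v'" "smooth_fun q'"
    and reg_stage: "\<forall>i\<in>{1..s}. smooth_fun (Es i) \<and> periodic_fun L (Es i)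
                 \<and> smooth_fun (Ns i) \<and> periodic_fun L (Ns i) \<and> smooth_fun (vs i) \<and> periodic_fun L (vs i)
                 \<and> smooth_fun (Qs i) \<and> periodic_fun L (Qs i)"
  shows "SS L \<epsilon> E' (cx N') (cx v') (cx q') E' (cx N') (cx v') (cx q')
       = SS L \<epsilon> E (cx N) (cx v) (cx q) E (cx N) (cx v) (cx q)"
proof -
  define I where "I = {1..s}"
  have fin: "finite I" unfolding I_def by simp
  define K2 where "K2 i = cx (k2 i)" for i
  define K3 where "K3 i = cx (k3 i)" for i
  define K4 where "K4 i = cx (k4 i)" for i
  have sk: "smooth_fun (k1 i) \<and> smooth_fun (K2 i) \<and> smooth_fun (K3 i) \<and> smooth_fun (K4 i)" if i: "i \<in> I" for i
    unfolding K2_def K3_def K4_def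
    using i reg_stage stk1 stk2 stk3 stk4 unfolding I_def
    by (intro stage_smooth[where Es="Es i" and Ns="Ns i" and vs="vs i" and Qs="Qs i" and \<epsilon>=\<epsilon>]) auto
  have sY: "smooth_fun E" "smooth_fun (cx N)" "smooth_fun (cx v)" "smooth_fun (cx q)"
    using reg by (auto intro: smooth_cx)
  have sY': "smooth_fun E'" "smooth_fun (cx N')" "smooth_fun (cx v')" "smooth_fun (cx q')"
    using reg' by (auto intro: smooth_cx)
  have r1: "E' = lc E \<tau> b k1 I" unfolding upE lc_def I_def ..
  have r2: "cx N' = lc (cx N) \<tau> b K2 I" unfolding upN lc_def I_def K2_def cx_def by simp
  have r3: "cx v' = lc (cx v) \<tau> b K3 I" unfolding upv lc_def I_def K3_def cx_def by simp
  have r4: "cx q' = lc (cx q) \<tau> b K4 I" unfolding upq lc_def I_def K4_def cx_def by simp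
  have s1: "Es i = lc E \<tau> (a i) k1 I" if "i \<in> I" for i using stE that unfolding lc_def I_def by auto
  have s2: "cx (Ns i) = lc (cx N) \<tau> (a i) K2 I" if "i \<in> I" for i
    using stN that unfolding lc_def I_def K2_def cx_def by auto
  have s3: "cx (vs i) = lc (cx v) \<tau> (a i) K3 I" if "i \<in> I" for i
    using stv that unfolding lc_def I_def K3_def cx_def by auto
  have s4: "cx (Qs i) = lc (cx q) \<tau> (a i) K4 I" if "i \<in> I" for i
    using stQ that unfolding lc_def I_def K4_def cx_def by auto
  define S0 where "S0 = SS L \<epsilon> E (cx N) (cx v) (cx q) E (cx N) (cx v) (cx q)"
  define P where "P i = SS L \<epsilon> E (cx N) (cx v) (cx q) (k1 i) (K2 i) (K3 i) (K4 i)" for i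
  define R where "R i = SS L \<epsilon> (k1 i) (K2 i) (K3 i) (K4 i) E (cx N) (cx v) (cx q)" for i
  define M where "M i j = SS L \<epsilon> (k1 i) (K2 i) (K3 i) (K4 i) (k1 j) (K2 j) (K3 j) (K4 j)" for i j
  define T where "T = (of_real \<tau> :: complex)"
  define B where "B i = (of_real (b i) :: complex)" for i
  define A where "A i j = (of_real (a i j) :: complex)" for i j
  have x1: "SS L \<epsilon> E' (cx N') (cx v') (cx q') E' (cx N') (cx v') (cx q')
      = SS L \<epsilon> E (cx N) (cx v) (cx q) E' (cx N') (cx v') (cx q')
        + T * (\<Sum>j\<in>I. B j * SS L \<epsilon> (k1 j) (K2 j) (K3 j) (K4 j) E' (cx N') (cx v') (cx q'))"
  proof -
    have "SS L \<epsilon> (lc E \<tau> b k1 I) (lc (cx N) \<tau> b K2 I) (lc (cx v) \<tau> b K3 I) (lc (cx q) \<tau> b K4 I) E' (cx N') (cx v') (cx q')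
      = SS L \<epsilon> E (cx N) (cx v) (cx q) E' (cx N') (cx v') (cx q')
        + of_real \<tau> * (\<Sum>j\<in>I. of_real (b j) * SS L \<epsilon> (k1 j) (K2 j) (K3 j) (K4 j) E' (cx N') (cx v') (cx q'))"
      by (rule SS_lc1[OF sY sk fin sY'])
    then show ?thesis unfolding r1[symmetric] r2[symmetric] r3[symmetric] r4[symmetric] T_def B_def .
  qed
  have x2: "SS L \<epsilon> E (cx N) (cx v) (cx q) E' (cx N') (cx v') (cx q') = S0 + T * (\<Sum>j\<in>I. B j * P j)"
  proof -
    have "SS L \<epsilon> E (cx N) (cx v) (cx q) (lc E \<tau> b k1 I) (lc (cx N) \<tau> b K2 I) (lc (cx v) \<tau> b K3 I) (lc (cx q) \<tau> b K4 I)
      = SS L \<epsilon> E (cx N) (cx v) (cx q) E (cx N) (cx v) (cx q)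
        + of_real \<tau> * (\<Sum>j\<in>I. of_real (b j) * SS L \<epsilon> E (cx N) (cx v) (cx q) (k1 j) (K2 j) (K3 j) (K4 j))"
      by (rule SS_lc2[OF sY sk fin sY])
    then show ?thesis unfolding r1[symmetric] r2[symmetric] r3[symmetric] r4[symmetric] T_def B_def S0_def P_def .
  qed
  have x3: "SS L \<epsilon> (k1 i) (K2 i) (K3 i) (K4 i) E' (cx N') (cx v') (cx q') = R i + T * (\<Sum>j\<in>I. B j * M i j)"
    if i: "i \<in> I" for i
  proof -
    have "SS L \<epsilon> (k1 i) (K2 i) (K3 i) (K4 i) (lc E \<tau> b k1 I) (lc (cx N) \<tau> b K2 I) (lc (cx v) \<tau> b K3 I) (lc (cx q) \<tau> b K4 I)
      = SS L \<epsilon> (k1 i) (K2 i) (K3 i) (K4 i) E (cx N) (cx v) (cx q)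
        + of_real \<tau> * (\<Sum>j\<in>I. of_real (b j) * SS L \<epsilon> (k1 i) (K2 i) (K3 i) (K4 i) (k1 j) (K2 j) (K3 j) (K4 j))"
      using sk[OF i] by (intro SS_lc2[OF sY sk fin]) auto
    then show ?thesis unfolding r1[symmetric] r2[symmetric] r3[symmetric] r4[symmetric] T_def B_def R_def M_def .
  qed
  have st: "\<forall>i\<in>{1..s}. (P i + T * (\<Sum>j=1..s. A i j * M j i)) + (R i + T * (\<Sum>j=1..s. A i j * M i j)) = 0"
  proof
    fix i assume i0: "i \<in> {1..s}"
    then have i: "i \<in> I" unfolding I_def .
    have y1: "SS L \<epsilon> (Es i) (cx (Ns i)) (cx (vs i)) (cx (Qs i)) (k1 i) (K2 i) (K3 i) (K4 i)
        = P i + T * (\<Sum>j=1..s. A i j * M j i)"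
    proof -
      have "SS L \<epsilon> (lc E \<tau> (a i) k1 I) (lc (cx N) \<tau> (a i) K2 I) (lc (cx v) \<tau> (a i) K3 I) (lc (cx q) \<tau> (a i) K4 I)
          (k1 i) (K2 i) (K3 i) (K4 i)
        = SS L \<epsilon> E (cx N) (cx v) (cx q) (k1 i) (K2 i) (K3 i) (K4 i)
          + of_real \<tau> * (\<Sum>j\<in>I. of_real (a i j) * SS L \<epsilon> (k1 j) (K2 j) (K3 j) (K4 j) (k1 i) (K2 i) (K3 i) (K4 i))"
        using sk[OF i] by (intro SS_lc1[OF sY sk fin]) auto
      then show ?thesis unfolding s1[OF i, symmetric] s2[OF i, symmetric] s3[OF i, symmetric] s4[OF i, symmetric]
        unfolding P_def M_def T_def A_def I_def .
    qed
    have y2: "SS L \<epsilon> (k1 i) (K2 i) (K3 i) (K4 i) (Es i) (cx (Ns i)) (cx (vs i)) (cx (Qs i))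
        = R i + T * (\<Sum>j=1..s. A i j * M i j)"
    proof -
      have "SS L \<epsilon> (k1 i) (K2 i) (K3 i) (K4 i) (lc E \<tau> (a i) k1 I) (lc (cx N) \<tau> (a i) K2 I) (lc (cx v) \<tau> (a i) K3 I) (lc (cx q) \<tau> (a i) K4 I)
        = SS L \<epsilon> (k1 i) (K2 i) (K3 i) (K4 i) E (cx N) (cx v) (cx q)
          + of_real \<tau> * (\<Sum>j\<in>I. of_real (a i j) * SS L \<epsilon> (k1 i) (K2 i) (K3 i) (K4 i) (k1 j) (K2 j) (K3 j) (K4 j))"
        using sk[OF i] by (intro SS_lc2[OF sY sk fin]) auto
      then show ?thesis unfolding s1[OF i, symmetric] s2[OF i, symmetric] s3[OF i, symmetric] s4[OF i, symmetric]
        unfolding R_def M_def T_def A_def I_def .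
    qed
    have z: "SS L \<epsilon> (Es i) (cx (Ns i)) (cx (vs i)) (cx (Qs i)) (k1 i) (K2 i) (K3 i) (K4 i)
        + SS L \<epsilon> (k1 i) (K2 i) (K3 i) (K4 i) (Es i) (cx (Ns i)) (cx (vs i)) (cx (Qs i)) = 0"
      unfolding K2_def K3_def K4_def
      using i0 reg_stage stk1 stk2 stk3 stk4
      by (intro stage_zero[OF L, where Es="Es i" and Ns="Ns i" and vs="vs i" and Qs="Qs i"]) auto
    show "(P i + T * (\<Sum>j=1..s. A i j * M j i)) + (R i + T * (\<Sum>j=1..s. A i j * M i j)) = 0"
      using z unfolding y1 y2 .
  qed
  have symp': "\<forall>i\<in>{1..s}. \<forall>j\<in>{1..s}. B i * A i j + B j * A j i = B i * B j"
    using symp unfolding A_def B_def by (auto simp flip: of_real_mult of_real_add)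
  have rk: "S0 + T * (\<Sum>i=1..s. B i * (P i + R i)) + T^2 * (\<Sum>i=1..s. \<Sum>j=1..s. B i * B j * M i j)
      = S0 + T * (\<Sum>i=1..s. B i * 0)"
    by (rule rk_alg[OF symp' st])
  have "SS L \<epsilon> E' (cx N') (cx v') (cx q') E' (cx N') (cx v') (cx q')
      = S0 + T * (\<Sum>j\<in>I. B j * P j) + T * (\<Sum>i\<in>I. B i * (R i + T * (\<Sum>j\<in>I. B j * M i j)))"
    unfolding x1 x2 using x3 by (simp add: sum_distrib_left)
  also have "\<dots> = S0 + T * (\<Sum>i=1..s. B i * (P i + R i)) + T^2 * (\<Sum>i=1..s. \<Sum>j=1..s. B i * B j * M i j)"
    unfolding I_def by (simp add: algebra_simps sum_distrib_left sum.distrib power2_eq_square)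
  also have "\<dots> = S0" using rk by simp
  finally show ?thesis unfolding S0_def .
qed


theorem theorem3p2:
  fixes L :: "real^'d::finite" and \<epsilon> \<tau> :: real and s J :: nat
    and a :: "nat \<Rightarrow> nat \<Rightarrow> real" and b :: "nat \<Rightarrow> real"
    and E :: "nat \<Rightarrow> real^'d \<Rightarrow> complex" and N v q :: "nat \<Rightarrow> real^'d \<Rightarrow> real"
    and Es k1 :: "nat \<Rightarrow> nat \<Rightarrow> real^'d \<Rightarrow> complex"
    and Ns vs Qs k2 k3 k4 :: "nat \<Rightarrow> nat \<Rightarrow> real^'d \<Rightarrow> real"
    and E0 :: "real^'d \<Rightarrow> complex" and N0 N1 :: "real^'d \<Rightarrow> real"
  assumes dim: "CARD('d) \<le> 2"
    and L_pos: "\<forall>i. L$i > 0"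
    and eps: "\<epsilon> > 0" and tau: "\<tau> > 0"
    and symp: "\<forall>i\<in>{1..s}. \<forall>j\<in>{1..s}. b i * a i j + b j * a j i = b i * b j"
    and stE: "\<forall>n<J. \<forall>i\<in>{1..s}. Es n i = (\<lambda>x. E n x + of_real \<tau> * (\<Sum>j=1..s. of_real (a i j) * k1 n j x))"
    and stk1: "\<forall>n<J. \<forall>i\<in>{1..s}. k1 n i = (\<lambda>x. \<i> * (lap (Es n i) x - of_real (\<epsilon>^2) * lap (lap (Es n i)) x
                                              - of_real (Ns n i x) * Es n i x))"
    and stN: "\<forall>n<J. \<forall>i\<in>{1..s}. Ns n i = (\<lambda>x. N n x + \<tau> * (\<Sum>j=1..s. a i j * k2 n j x))"
    and stk2: "\<forall>n<J. \<forall>i\<in>{1..s}. k2 n i = lap (vs n i)"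
    and stv: "\<forall>n<J. \<forall>i\<in>{1..s}. vs n i = (\<lambda>x. v n x + \<tau> * (\<Sum>j=1..s. a i j * k3 n j x))"
    and stk3: "\<forall>n<J. \<forall>i\<in>{1..s}. k3 n i = (\<lambda>x. Ns n i x - \<epsilon>^2 * lap (Ns n i) x + Qs n i x)"
    and stQ: "\<forall>n<J. \<forall>i\<in>{1..s}. Qs n i = (\<lambda>x. q n x + \<tau> * (\<Sum>j=1..s. a i j * k4 n j x))"
    and stk4: "\<forall>n<J. \<forall>i\<in>{1..s}. k4 n i = (\<lambda>x. 2 * Re (cnj (Es n i x) * k1 n i x))"
    and upE: "\<forall>n<J. E (Suc n) = (\<lambda>x. E n x + of_real \<tau> * (\<Sum>i=1..s. of_real (b i) * k1 n i x))"
    and upN: "\<forall>n<J. N (Suc n) = (\<lambda>x. N n x + \<tau> * (\<Sum>i=1..s. b i * k2 n i x))"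
    and upv: "\<forall>n<J. v (Suc n) = (\<lambda>x. v n x + \<tau> * (\<Sum>i=1..s. b i * k3 n i x))"
    and upq: "\<forall>n<J. q (Suc n) = (\<lambda>x. q n x + \<tau> * (\<Sum>i=1..s. b i * k4 n i x))"
    and init_E: "E 0 = E0" and init_N: "N 0 = N0"
    and init_q: "q 0 = (\<lambda>x. (cmod (E0 x))^2)"
    and init_v: "lap (v 0) = N1" and v0_mean: "integral (cbox 0 L) (v 0) = 0"
    and N1_mean: "integral (cbox 0 L) N1 = 0"
    and reg: "\<forall>n\<le>J. smooth_fun (E n) \<and> periodic_fun L (E n) \<and> smooth_fun (N n) \<and> periodic_fun L (N n)
                 \<and> smooth_fun (v n) \<and> periodic_fun L (v n) \<and> smooth_fun (q n) \<and> periodic_fun L (q n)"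
    and reg_stage: "\<forall>n<J. \<forall>i\<in>{1..s}. smooth_fun (Es n i) \<and> periodic_fun L (Es n i)
                 \<and> smooth_fun (Ns n i) \<and> periodic_fun L (Ns n i) \<and> smooth_fun (vs n i) \<and> periodic_fun L (vs n i)
                 \<and> smooth_fun (Qs n i) \<and> periodic_fun L (Qs n i)"
  shows "\<forall>n\<in>{1..J}. energy L \<epsilon> (E n) (N n) (v n) = energy L \<epsilon> (E 0) (N 0) (v 0)"
proof -
  have sp: "\<And>P m. \<forall>n<J. P n \<Longrightarrow> m < J \<Longrightarrow> P m" by blast
  have rg: "smooth_fun (E m)" "smooth_fun (N m)" "smooth_fun (v m)" "smooth_fun (q m)" if "m \<le> J" for m
    using reg that by auto
  have inv: "\<forall>x. q n x = (cmod (E n x))^2" if "n \<le> J" for n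
    using that
  proof (induction n)
    case 0
    show ?case using init_q init_E by simp
  next
    case (Suc n)
    then have n: "n < J" by simp
    have IH: "\<forall>x. q n x = (cmod (E n x))^2" using Suc by simp
    show ?case
    proof
      fix x
      show "q (Suc n) x = (cmod (E (Suc n) x))^2"
        by (rule step_q[OF symp sp[OF stE n] sp[OF stk4 n] sp[OF upE n] sp[OF upq n]]) (use IH in blast)
    qed
  qed
  have en: "SS L \<epsilon> (E n) (cx (N n)) (cx (v n)) (cx (q n)) (E n) (cx (N n)) (cx (v n)) (cx (q n))
      = SS L \<epsilon> (E 0) (cx (N 0)) (cx (v 0)) (cx (q 0)) (E 0) (cx (N 0)) (cx (v 0)) (cx (q 0))" if "n \<le> J" for n
    using that
  proof (induction n)
    case 0
    show ?case by simp
  next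
    case (Suc n)
    then have n: "n < J" by simp
    have "SS L \<epsilon> (E (Suc n)) (cx (N (Suc n))) (cx (v (Suc n))) (cx (q (Suc n))) (E (Suc n)) (cx (N (Suc n))) (cx (v (Suc n))) (cx (q (Suc n)))
      = SS L \<epsilon> (E n) (cx (N n)) (cx (v n)) (cx (q n)) (E n) (cx (N n)) (cx (v n)) (cx (q n))"
      by (rule step_energy[OF L_pos symp sp[OF stE n] sp[OF stk1 n] sp[OF stN n] sp[OF stk2 n] sp[OF stv n]
            sp[OF stk3 n] sp[OF stQ n] sp[OF stk4 n] sp[OF upE n] sp[OF upN n] sp[OF upv n] sp[OF upq n]
            rg[of n] rg[of "Suc n"] sp[OF reg_stage n]]) (use n in auto)
    then show ?case using Suc by simp
  qed
  show ?thesis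
  proof
    fix n assume "n \<in> {1..J}"
    then have n: "n \<le> J" by simp
    have "energy L \<epsilon> (E n) (N n) (v n) = SS L \<epsilon> (E n) (cx (N n)) (cx (v n)) (cx (q n)) (E n) (cx (N n)) (cx (v n)) (cx (q n))"
      by (rule energy_SS[OF rg(1-3)[OF n] inv[OF n]])
    also have "\<dots> = SS L \<epsilon> (E 0) (cx (N 0)) (cx (v 0)) (cx (q 0)) (E 0) (cx (N 0)) (cx (v 0)) (cx (q 0))"
      by (rule en[OF n])
    also have "\<dots> = energy L \<epsilon> (E 0) (N 0) (v 0)"
      by (rule energy_SS[symmetric, OF rg(1-3)[of 0] inv[of 0]]) simp_all
    finally show "energy L \<epsilon> (E n) (N n) (v n) = energy L \<epsilon> (E 0) (N 0) (v 0)" .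
  qed
qed

end
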